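(* Let $G$ be a finite simple connected graph and $w$ a non-negative real function on the edges of $G$. Let $d_s$ be the shortest-path distance on the vertices of $G$, and define $\pi(u,u)=0$ and, for distinct vertices $u,v$, \[\pi(u,v) = \min\left\{ \frac{p(\gamma)}{p(\gamma)+1} : \gamma \text{ is a shortest path between } u \text{ and } v\right\},\] where $p(\gamma) = \prod_{e \in \gamma} w(e)$. Then $d^{\pi}_w := d_s + \pi$ is a metric on the vertex set of $G$ that refines $d_s$.
   Context: Metrics on a vertex set $V$ are regarded as functions on $V \times V$. For functions $f,f'\colon V\times V \to \mathbb{R}$, $f'$ refines $f$ if for all pairs $(x_1,x_2),(x_1',x_2') \in V\times V$ that agree in at least one coordinate, $f(x_1,x_2) < f(x_1',x_2')$ implies $f'(x_1,x_2) < f'(x_1',x_2')$. *)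

theory Defs
  imports Complex_Main
begin

definition simple_graph :: "'a set \<Rightarrow> 'a set set \<Rightarrow> bool" where
  "simple_graph V E \<longleftrightarrow> finite V \<and> (\<forall>e\<in>E. e \<subseteq> V \<and> card e = 2)"

definition walk_betw :: "'a set \<Rightarrow> 'a set set \<Rightarrow> 'a \<Rightarrow> 'a list \<Rightarrow> 'a \<Rightarrow> bool" where
  "walk_betw V E u xs v \<longleftrightarrow> xs \<noteq> [] \<and> set xs \<subseteq> V \<and> hd xs = u \<and> last xs = v \<and>
     (\<forall>i. Suc i < length xs \<longrightarrow> {xs ! i, xs ! Suc i} \<in> E)"

definition path_betw :: "'a set \<Rightarrow> 'a set set \<Rightarrow> 'a \<Rightarrow> 'a list \<Rightarrow> 'a \<Rightarrow> bool" where
  "path_betw V E u xs v \<longleftrightarrow> walk_betw V E u xs v \<and> distinct xs"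

definition connected_graph :: "'a set \<Rightarrow> 'a set set \<Rightarrow> bool" where
  "connected_graph V E \<longleftrightarrow> (\<forall>u\<in>V. \<forall>v\<in>V. \<exists>xs. walk_betw V E u xs v)"

definition dist_s :: "'a set \<Rightarrow> 'a set set \<Rightarrow> 'a \<Rightarrow> 'a \<Rightarrow> nat" where
  "dist_s V E u v = (LEAST n. \<exists>xs. path_betw V E u xs v \<and> length xs = Suc n)"

definition shortest_paths :: "'a set \<Rightarrow> 'a set set \<Rightarrow> 'a \<Rightarrow> 'a \<Rightarrow> 'a list set" where
  "shortest_paths V E u v = {xs. path_betw V E u xs v \<and> length xs = Suc (dist_s V E u v)}"

definition path_edges :: "'a list \<Rightarrow> 'a set list" where
  "path_edges xs = map (\<lambda>i. {xs ! i, xs ! Suc i}) [0..<length xs - 1]"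

definition path_weight :: "('a set \<Rightarrow> real) \<Rightarrow> 'a list \<Rightarrow> real" where
  "path_weight w xs = prod_list (map w (path_edges xs))"

definition pi_w :: "'a set \<Rightarrow> 'a set set \<Rightarrow> ('a set \<Rightarrow> real) \<Rightarrow> 'a \<Rightarrow> 'a \<Rightarrow> real" where
  "pi_w V E w u v = (if u = v then 0 else
     Min ((\<lambda>\<gamma>. path_weight w \<gamma> / (path_weight w \<gamma> + 1)) ` shortest_paths V E u v))"

definition d_pi :: "'a set \<Rightarrow> 'a set set \<Rightarrow> ('a set \<Rightarrow> real) \<Rightarrow> 'a \<Rightarrow> 'a \<Rightarrow> real" where
  "d_pi V E w u v = real (dist_s V E u v) + pi_w V E w u v"

definition is_metric_on :: "'a set \<Rightarrow> ('a \<Rightarrow> 'a \<Rightarrow> real) \<Rightarrow> bool" where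
  "is_metric_on V d \<longleftrightarrow>
     (\<forall>x\<in>V. \<forall>y\<in>V. d x y \<ge> 0 \<and> (d x y = 0 \<longleftrightarrow> x = y) \<and> d x y = d y x) \<and>
     (\<forall>x\<in>V. \<forall>y\<in>V. \<forall>z\<in>V. d x z \<le> d x y + d y z)"

definition refines :: "'a set \<Rightarrow> ('a \<Rightarrow> 'a \<Rightarrow> real) \<Rightarrow> ('a \<Rightarrow> 'a \<Rightarrow> real) \<Rightarrow> bool" where
  "refines V f f' \<longleftrightarrow> (\<forall>x1\<in>V. \<forall>x2\<in>V. \<forall>y1\<in>V. \<forall>y2\<in>V.
      (x1 = y1 \<or> x2 = y2) \<longrightarrow> f x1 x2 < f y1 y2 \<longrightarrow> f' x1 x2 < f' y1 y2)"

end

theory Submission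
  imports Defs
begin

lemma walk_betw_succ:
  "walk_betw V E u xs v \<longleftrightarrow> xs \<noteq> [] \<and> set xs \<subseteq> V \<and> hd xs = u \<and> last xs = v \<and>
     successively (\<lambda>x y. {x,y} \<in> E) xs"
  unfolding walk_betw_def successively_conv_nth by blast

lemma path_edges_simps [simp]:
  "path_edges [] = []" "path_edges [x] = []"
  "path_edges (x # y # zs) = {x,y} # path_edges (y # zs)"
  unfolding path_edges_def
  by (simp_all add: upt_conv_Cons map_Suc_upt[symmetric] del: upt_Suc)

lemma path_weight_simps [simp]:
  "path_weight w [x] = 1"
  "path_weight w (x # y # zs) = w {x,y} * path_weight w (y # zs)"
  unfolding path_weight_def by simp_all

lemma path_weight_append:
  assumes "xs \<noteq> []" "ys \<noteq> []" "last xs = hd ys"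
  shows "path_weight w (xs @ tl ys) = path_weight w xs * path_weight w ys"
  using assms
proof (induction xs rule: induct_list012)
  case 1 then show ?case by simp
next
  case (2 x) then show ?case by (cases ys) auto
next
  case (3 x y zs) then show ?case by simp
qed

lemma path_weight_rev: "path_weight w (rev xs) = path_weight w xs"
proof (induction xs rule: induct_list012)
  case 1 then show ?case by (simp add: path_weight_def)
next
  case (2 x) then show ?case by simp
next
  case (3 x y zs)
  have "rev (x # y # zs) = rev (y # zs) @ tl [y, x]" by simp
  then have "path_weight w (rev (x # y # zs)) = path_weight w (rev (y # zs)) * path_weight w [y,x]"
    using path_weight_append[of "rev (y # zs)" "[y,x]" w] by (simp add: last_rev)
  then show ?case using 3 by (simp add: insert_commute)
qed

lemma path_weight_nonneg:
  assumes "successively (\<lambda>x y. {x,y} \<in> E) xs" "\<forall>e\<in>E. w e \<ge> 0"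
  shows "path_weight w xs \<ge> 0"
  using assms
proof (induction xs rule: induct_list012)
  case 1 then show ?case by (simp add: path_weight_def)
next
  case (2 x) then show ?case by simp
next
  case (3 x y zs) then show ?case by simp
qed

lemma walk_shorten:
  assumes "walk_betw V E u xs v" "\<not> distinct xs"
  shows "\<exists>ys. walk_betw V E u ys v \<and> length ys < length xs"
proof -
  obtain a b c y where xs: "xs = a @ [y] @ b @ [y] @ c" using not_distinct_decomp assms(2) by blast
  let ?P = "\<lambda>x y. {x,y} \<in> E"
  have s: "successively ?P xs" using assms(1) by (simp add: walk_betw_succ)
  then have "successively ?P (a @ y # c)"
    unfolding xs by (auto simp: successively_append_iff successively_Cons)
  moreover have "hd (a @ y # c) = hd xs" by (cases a) (auto simp: xs)
  moreover have "last (a @ y # c) = last xs" by (simp add: xs last_append)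
  moreover have "set (a @ y # c) \<subseteq> set xs" by (auto simp: xs)
  ultimately have "walk_betw V E u (a @ y # c) v" using assms(1) by (auto simp: walk_betw_succ)
  then show ?thesis by (auto simp: xs)
qed

lemma walk_to_path:
  "walk_betw V E u xs v \<Longrightarrow> \<exists>ys. path_betw V E u ys v \<and> length ys \<le> length xs"
proof (induction "length xs" arbitrary: xs rule: less_induct)
  case less
  show ?case
  proof (cases "distinct xs")
    case True then show ?thesis using less.prems by (intro exI[of _ xs]) (simp add: path_betw_def)
  next
    case False
    obtain ys where ys: "walk_betw V E u ys v" "length ys < length xs"
      using walk_shorten[OF less.prems False] by blast
    obtain zs where zs: "path_betw V E u zs v" "length zs \<le> length ys"
      using less.hyps[OF ys(2) ys(1)] by blast
    show ?thesis using zs ys(2) by (intro exI[of _ zs]) simp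
  qed
qed

lemma dist_path:
  assumes "connected_graph V E" "u \<in> V" "v \<in> V"
  shows "\<exists>xs. path_betw V E u xs v \<and> length xs = Suc (dist_s V E u v)"
proof -
  obtain xs where "walk_betw V E u xs v" using assms unfolding connected_graph_def by blast
  then obtain ys where ys: "path_betw V E u ys v" using walk_to_path[OF \<open>walk_betw V E u xs v\<close>] by blast
  then have "ys \<noteq> []" by (simp add: path_betw_def walk_betw_def)
  then have "\<exists>n xs. path_betw V E u xs v \<and> length xs = Suc n"
    using ys by (intro exI[of _ "length ys - 1"] exI[of _ ys]) auto
  then show ?thesis unfolding dist_s_def by (rule LeastI_ex)
qed

lemma dist_le:
  assumes "walk_betw V E u xs v"
  shows "Suc (dist_s V E u v) \<le> length xs"
proof -
  obtain ys where ys: "path_betw V E u ys v" "length ys \<le> length xs"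
    using walk_to_path[OF assms] by blast
  then have "ys \<noteq> []" by (simp add: path_betw_def walk_betw_def)
  then obtain n where n: "length ys = Suc n" by (cases ys) auto
  have "dist_s V E u v \<le> n" unfolding dist_s_def
    by (rule Least_le) (use ys n in blast)
  then show ?thesis using ys n by simp
qed

lemma walk_append:
  assumes "walk_betw V E x xs y" "walk_betw V E y ys z"
  shows "walk_betw V E x (xs @ tl ys) z \<and> length (xs @ tl ys) = length xs + length ys - 1"
proof -
  obtain ys' where ys: "ys = y # ys'" using assms(2) unfolding walk_betw_succ
    by (cases ys) auto
  show ?thesis using assms unfolding walk_betw_succ ys
    by (auto simp: successively_append_iff successively_Cons hd_append last_append)
qed

lemma walk_rev:
  assumes "walk_betw V E x xs y"
  shows "walk_betw V E y (rev xs) x"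
  using assms unfolding walk_betw_succ by (auto simp: hd_rev last_rev insert_commute)

lemma path_rev:
  assumes "path_betw V E x xs y"
  shows "path_betw V E y (rev xs) x"
  using assms walk_rev unfolding path_betw_def by auto

lemma dist_refl: "u \<in> V \<Longrightarrow> dist_s V E u u = 0"
  using dist_le[of V E u "[u]" u] by (simp add: walk_betw_def)

lemma dist_pos:
  assumes "connected_graph V E" "u \<in> V" "v \<in> V" "u \<noteq> v"
  shows "dist_s V E u v \<ge> 1"
proof (rule ccontr)
  assume "\<not> ?thesis"
  then have "dist_s V E u v = 0" by simp
  then obtain xs where "path_betw V E u xs v" "length xs = 1"
    using dist_path[OF assms(1-3)] by auto
  then show False using assms(4)
    by (cases xs) (auto simp: path_betw_def walk_betw_def)
qed

lemma dist_sym_le: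
  assumes "connected_graph V E" "u \<in> V" "v \<in> V"
  shows "dist_s V E v u \<le> dist_s V E u v"
proof -
  obtain xs where xs: "path_betw V E u xs v" "length xs = Suc (dist_s V E u v)"
    using dist_path[OF assms] by blast
  have "walk_betw V E v (rev xs) u" using xs(1) walk_rev by (auto simp: path_betw_def)
  from dist_le[OF this] show ?thesis using xs by simp
qed

lemma dist_sym:
  assumes "connected_graph V E" "u \<in> V" "v \<in> V"
  shows "dist_s V E v u = dist_s V E u v"
  using dist_sym_le[OF assms] dist_sym_le[OF assms(1,3,2)] by simp

lemma dist_tri:
  assumes "connected_graph V E" "x \<in> V" "y \<in> V" "z \<in> V"
  shows "dist_s V E x z \<le> dist_s V E x y + dist_s V E y z"
proof -
  obtain xs where xs: "path_betw V E x xs y" "length xs = Suc (dist_s V E x y)"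
    using dist_path[OF assms(1,2,3)] by blast
  obtain ys where ys: "path_betw V E y ys z" "length ys = Suc (dist_s V E y z)"
    using dist_path[OF assms(1,3,4)] by blast
  have w: "walk_betw V E x (xs @ tl ys) z \<and> length (xs @ tl ys) = length xs + length ys - 1"
    using xs(1) ys(1) by (intro walk_append) (auto simp: path_betw_def)
  then have "Suc (dist_s V E x z) \<le> length (xs @ tl ys)" using dist_le[of V E x "xs @ tl ys" z] by blast
  moreover have "length (xs @ tl ys) = Suc (dist_s V E x y) + dist_s V E y z"
    using xs(2) ys(2) by (simp only: length_append length_tl)
  ultimately show ?thesis by linarith
qed

lemma sp_finite:
  assumes "simple_graph V E"
  shows "finite (shortest_paths V E u v)"
proof -
  have "shortest_paths V E u v \<subseteq> {xs. set xs \<subseteq> V \<and> length xs = Suc (dist_s V E u v)}"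
    unfolding shortest_paths_def path_betw_def walk_betw_def by blast
  moreover have "finite {xs. set xs \<subseteq> V \<and> length xs = Suc (dist_s V E u v)}"
    using assms unfolding simple_graph_def by (blast intro: finite_lists_length_eq)
  ultimately show ?thesis by (rule finite_subset)
qed

lemma sp_nonempty:
  assumes "connected_graph V E" "u \<in> V" "v \<in> V"
  shows "shortest_paths V E u v \<noteq> {}"
  using dist_path[OF assms] by (auto simp: shortest_paths_def)

lemma sp_weight_nonneg:
  assumes "\<forall>e\<in>E. w e \<ge> 0" "xs \<in> shortest_paths V E u v"
  shows "path_weight w xs \<ge> 0"
  using assms path_weight_nonneg[of E xs w]
  by (auto simp: shortest_paths_def path_betw_def walk_betw_succ)

lemma frac_bounds: "(t::real) \<ge> 0 \<Longrightarrow> 0 \<le> t / (t + 1) \<and> t / (t + 1) < 1"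
  by (simp add: divide_simps algebra_simps)

lemma pi_bounds:
  assumes "simple_graph V E" "connected_graph V E" "\<forall>e\<in>E. w e \<ge> 0" "u \<in> V" "v \<in> V"
  shows "0 \<le> pi_w V E w u v \<and> pi_w V E w u v < 1"
proof (cases "u = v")
  case True then show ?thesis by (simp add: pi_w_def)
next
  case False
  let ?S = "(\<lambda>\<gamma>. path_weight w \<gamma> / (path_weight w \<gamma> + 1)) ` shortest_paths V E u v"
  have fin: "finite ?S" using sp_finite[OF assms(1)] by simp
  have ne: "?S \<noteq> {}" using sp_nonempty[OF assms(2,4,5)] by simp
  have "Min ?S \<in> ?S" using Min_in[OF fin ne] .
  then obtain g where g: "g \<in> shortest_paths V E u v"
    "Min ?S = path_weight w g / (path_weight w g + 1)" by auto
  have "0 \<le> path_weight w g" using sp_weight_nonneg[OF assms(3) g(1)] .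
  from frac_bounds[OF this] show ?thesis using False g(2) by (simp add: pi_w_def)
qed

lemma sp_rev:
  assumes a: "connected_graph V E" "u \<in> V" "v \<in> V"
  shows "shortest_paths V E v u = rev ` shortest_paths V E u v"
proof -
  have sub: "rev ` shortest_paths V E u v \<subseteq> shortest_paths V E v u"
    if "u \<in> V" "v \<in> V" for u v
    using path_rev dist_sym[OF a(1) that]
    by (auto simp: shortest_paths_def)
  show ?thesis
  proof
    show "rev ` shortest_paths V E u v \<subseteq> shortest_paths V E v u" using sub a by blast
    show "shortest_paths V E v u \<subseteq> rev ` shortest_paths V E u v"
    proof
      fix xs assume "xs \<in> shortest_paths V E v u"
      then have "rev xs \<in> shortest_paths V E u v" using sub[of v u] a by blast
      then show "xs \<in> rev ` shortest_paths V E u v" by (metis image_eqI rev_rev_ident)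
    qed
  qed
qed

lemma pi_sym:
  assumes "connected_graph V E" "u \<in> V" "v \<in> V"
  shows "pi_w V E w v u = pi_w V E w u v"
proof -
  have "(\<lambda>\<gamma>. path_weight w \<gamma> / (path_weight w \<gamma> + 1)) ` shortest_paths V E v u =
        (\<lambda>\<gamma>. path_weight w \<gamma> / (path_weight w \<gamma> + 1)) ` shortest_paths V E u v"
    unfolding sp_rev[OF assms] image_image path_weight_rev ..
  then show ?thesis by (simp add: pi_w_def)
qed

lemma frac_mono: "(a::real) \<ge> 0 \<Longrightarrow> a \<le> b \<Longrightarrow> a / (a + 1) \<le> b / (b + 1)"
  by (simp add: divide_simps algebra_simps)

lemma frac_prod:
  assumes "(a::real) \<ge> 0" "b \<ge> 0"
  shows "(a*b) / (a*b + 1) \<le> a / (a + 1) + b / (b + 1)"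
proof (cases "a \<le> 1")
  case True
  then have "(a*b) / (a*b + 1) \<le> b / (b + 1)"
    using assms by (intro frac_mono) (auto simp: mult_left_le_one_le)
  then show ?thesis using frac_bounds[OF assms(1)] by linarith
next
  case a: False
  show ?thesis
  proof (cases "b \<le> 1")
    case True
    then have "(a*b) / (a*b + 1) \<le> a / (a + 1)"
      using assms by (intro frac_mono) (auto simp: mult_right_le_one_le)
    then show ?thesis using frac_bounds[OF assms(2)] by linarith
  next
    case False
    then have h: "a / (a + 1) \<ge> 1/2" "b / (b + 1) \<ge> 1/2" using a by (simp_all add: divide_simps)
    have "a*b/(a*b+1) < 1" using frac_bounds[of "a*b"] assms by simp
    then show ?thesis using h by linarith
  qed
qed

lemma pi_tri:
  assumes "simple_graph V E" "connected_graph V E" "\<forall>e\<in>E. w e \<ge> 0"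
    "x \<in> V" "y \<in> V" "z \<in> V" "x \<noteq> y" "y \<noteq> z" "x \<noteq> z"
    "dist_s V E x z = dist_s V E x y + dist_s V E y z"
  shows "pi_w V E w x z \<le> pi_w V E w x y + pi_w V E w y z"
proof -
  define f where "f = (\<lambda>\<gamma>. path_weight w \<gamma> / (path_weight w \<gamma> + 1))"
  have pim: "pi_w V E w u v = Min (f ` shortest_paths V E u v)" if "u \<noteq> v" for u v
    using that by (simp add: pi_w_def f_def)
  have ex: "\<exists>g\<in>shortest_paths V E u v. pi_w V E w u v = f g"
    if "u \<in> V" "v \<in> V" "u \<noteq> v" for u v
  proof -
    have fin: "finite (f ` shortest_paths V E u v)" using sp_finite[OF assms(1)] by simp
    have ne: "f ` shortest_paths V E u v \<noteq> {}" using sp_nonempty[OF assms(2) that(1,2)] by simp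
    show ?thesis using Min_in[OF fin ne] pim[OF that(3)] by auto
  qed
  obtain g1 where g1: "g1 \<in> shortest_paths V E x y" "pi_w V E w x y = f g1"
    using ex assms by blast
  obtain g2 where g2: "g2 \<in> shortest_paths V E y z" "pi_w V E w y z = f g2"
    using ex assms by blast
  have w: "walk_betw V E x (g1 @ tl g2) z \<and> length (g1 @ tl g2) = length g1 + length g2 - 1"
    using g1 g2 by (intro walk_append) (auto simp: shortest_paths_def path_betw_def)
  have l1: "length g1 = Suc (dist_s V E x y)" using g1(1) unfolding shortest_paths_def by blast
  have l2: "length g2 = Suc (dist_s V E y z)" using g2(1) unfolding shortest_paths_def by blast
  have len: "length (g1 @ tl g2) = Suc (dist_s V E x z)"
    unfolding length_append length_tl l1 l2 assms(10) by simp
  have "distinct (g1 @ tl g2)"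
  proof (rule ccontr)
    assume "\<not> ?thesis"
    then obtain ys where "walk_betw V E x ys z" "length ys < length (g1 @ tl g2)"
      using walk_shorten[of V E x "g1 @ tl g2" z] w by blast
    then show False using dist_le[of V E x ys z] len by simp
  qed
  then have g: "g1 @ tl g2 \<in> shortest_paths V E x z"
    using w len by (auto simp: shortest_paths_def path_betw_def)
  have ne1: "g1 \<noteq> []" "last g1 = y" using g1(1) by (auto simp: shortest_paths_def path_betw_def walk_betw_def)
  have ne2: "g2 \<noteq> []" "hd g2 = y" using g2(1) by (auto simp: shortest_paths_def path_betw_def walk_betw_def)
  have pw: "path_weight w (g1 @ tl g2) = path_weight w g1 * path_weight w g2"
    using ne1 ne2 by (intro path_weight_append) auto
  have "pi_w V E w x z \<le> f (g1 @ tl g2)"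
    unfolding pim[OF assms(9)] using g sp_finite[OF assms(1)] by (intro Min_le) auto
  also have "f (g1 @ tl g2) = (path_weight w g1 * path_weight w g2) / (path_weight w g1 * path_weight w g2 + 1)"
    unfolding f_def pw ..
  also have "\<dots> \<le> f g1 + f g2" unfolding f_def
    by (rule frac_prod[OF sp_weight_nonneg[OF assms(3) g1(1)] sp_weight_nonneg[OF assms(3) g2(1)]])
  finally show ?thesis using g1 g2 by simp
qed

theorem proposition5:
  fixes V :: "'a set" and E :: "'a set set" and w :: "'a set \<Rightarrow> real"
  assumes "simple_graph V E" and "connected_graph V E"
    and "\<forall>e\<in>E. w e \<ge> 0"
  shows "is_metric_on V (d_pi V E w) \<and>
         refines V (\<lambda>u v. real (dist_s V E u v)) (d_pi V E w)"
proof
  note pb = pi_bounds[OF assms]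
  show "is_metric_on V (d_pi V E w)"
    unfolding is_metric_on_def
  proof (intro conjI ballI)
    fix x y assume xy: "x \<in> V" "y \<in> V"
    show "d_pi V E w x y \<ge> 0" using pb[OF xy] by (simp add: d_pi_def)
    show "d_pi V E w x y = d_pi V E w y x"
      using dist_sym[OF assms(2) xy] pi_sym[OF assms(2) xy] by (simp add: d_pi_def)
    show "(d_pi V E w x y = 0) = (x = y)"
    proof
      assume "d_pi V E w x y = 0"
      then show "x = y" using pb[OF xy] dist_pos[OF assms(2) xy] unfolding d_pi_def
        by (cases "x = y") auto
    next
      assume "x = y" then show "d_pi V E w x y = 0"
        using dist_refl[OF xy(1)] by (simp add: d_pi_def pi_w_def)
    qed
  next
    fix x y z assume xyz: "x \<in> V" "y \<in> V" "z \<in> V"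
    show "d_pi V E w x z \<le> d_pi V E w x y + d_pi V E w y z"
    proof (cases "x = y \<or> y = z")
      case True then show ?thesis
        using dist_refl[of x V E] dist_refl[of z V E] xyz by (auto simp: d_pi_def pi_w_def)
    next
      case ne: False
      show ?thesis
      proof (cases "x = z")
        case True then show ?thesis
          using dist_refl[of x V E] xyz pb[of x y] pb[of y z] by (auto simp: d_pi_def pi_w_def)
      next
        case xz: False
        have t: "dist_s V E x z \<le> dist_s V E x y + dist_s V E y z"
          using dist_tri[OF assms(2) xyz] .
        show ?thesis
        proof (cases "dist_s V E x z = dist_s V E x y + dist_s V E y z")
          case True
          then show ?thesis using pi_tri[OF assms xyz _ _ xz True] ne
            by (simp add: d_pi_def)
        next
          case False
          then have "real (dist_s V E x z) + 1 \<le> real (dist_s V E x y) + real (dist_s V E y z)"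
            using t by linarith
          then show ?thesis using pb[of x z] pb[of x y] pb[of y z] xyz
            by (simp add: d_pi_def)
        qed
      qed
    qed
  qed
  show "refines V (\<lambda>u v. real (dist_s V E u v)) (d_pi V E w)"
    unfolding refines_def
  proof (intro ballI impI)
    fix x1 x2 y1 y2 assume v: "x1 \<in> V" "x2 \<in> V" "y1 \<in> V" "y2 \<in> V"
      and lt: "real (dist_s V E x1 x2) < real (dist_s V E y1 y2)"
    then have "real (dist_s V E x1 x2) + 1 \<le> real (dist_s V E y1 y2)" by simp
    then show "d_pi V E w x1 x2 < d_pi V E w y1 y2"
      using pb[of x1 x2] pb[of y1 y2] v by (simp add: d_pi_def)
  qed
qed

end
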